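(* Let $\mathcal X$ be a real normed space equipped with isosceles orthogonality $\perp$, and let $\mathcal Y$ be a Banach space. Let $f,g,h,k:\mathcal X\to\mathcal Y$ satisfy $f(0)=g(0)=h(0)=k(0)=0$ and, for some $\varepsilon>0$, \[\|f(x+y)+g(x-y)-h(x)-k(y)\|\le\varepsilon\quad\text{for all }x,y\in\mathcal X\text{ with }x\perp y.\] Then $f$ is a linear combination (with real coefficients) of an approximately orthogonally Cauchy mapping, an approximately orthogonally quadratic mapping and an approximately orthogonally constant mapping, all from $\mathcal X$ to $\mathcal Y$. The same is true for $g$.
   Context: For $x,y$ in a real normed space $\mathcal X$, isosceles orthogonality is defined by $x\perp y$ if and only if $\|x+y\|=\|x-y\|$. A mapping $\varphi:\mathcal X\to\mathcal Y$ is: approximately orthogonally Cauchy if there is $\delta>0$ with $\|\varphi(x+y)-\varphi(x)-\varphi(y)\|\le\delta$ for all $x\perp y$; approximately orthogonally quadratic if there is $\delta>0$ with $\|\varphi(x+y)+\varphi(x-y)-2\varphi(x)-2\varphi(y)\|\le\delta$ for all $x\perp y$; approximately orthogonally constant if there is $\delta>0$ with $\|\varphi(x+y)-\varphi(x-y)\|\le\delta$ for all $x\perp y$. *)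

theory Defs
  imports "HOL-Analysis.Analysis"
begin

definition iso_orth :: "'a::real_normed_vector \<Rightarrow> 'a \<Rightarrow> bool" where
  "iso_orth x y \<longleftrightarrow> norm (x + y) = norm (x - y)"

definition approx_orth_cauchy :: "('a::real_normed_vector \<Rightarrow> 'b::real_normed_vector) \<Rightarrow> bool" where
  "approx_orth_cauchy \<phi> \<longleftrightarrow> (\<exists>\<delta>>0. \<forall>x y. iso_orth x y \<longrightarrow>
      norm (\<phi> (x + y) - \<phi> x - \<phi> y) \<le> \<delta>)"

definition approx_orth_quadratic :: "('a::real_normed_vector \<Rightarrow> 'b::real_normed_vector) \<Rightarrow> bool" where
  "approx_orth_quadratic \<phi> \<longleftrightarrow> (\<exists>\<delta>>0. \<forall>x y. iso_orth x y \<longrightarrow>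
      norm (\<phi> (x + y) + \<phi> (x - y) - 2 *\<^sub>R \<phi> x - 2 *\<^sub>R \<phi> y) \<le> \<delta>)"

definition approx_orth_constant :: "('a::real_normed_vector \<Rightarrow> 'b::real_normed_vector) \<Rightarrow> bool" where
  "approx_orth_constant \<phi> \<longleftrightarrow> (\<exists>\<delta>>0. \<forall>x y. iso_orth x y \<longrightarrow>
      norm (\<phi> (x + y) - \<phi> (x - y)) \<le> \<delta>)"

definition lin_comb_CQK :: "('a::real_normed_vector \<Rightarrow> 'b::real_normed_vector) \<Rightarrow> bool" where
  "lin_comb_CQK \<phi> \<longleftrightarrow> (\<exists>(a::real) (b::real) (c::real) C Q K.
      approx_orth_cauchy C \<and> approx_orth_quadratic Q \<and> approx_orth_constant K \<and>
      (\<forall>x. \<phi> x = a *\<^sub>R C x + b *\<^sub>R Q x + c *\<^sub>R K x))"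

end

theory Submission
  imports Defs
begin

lemma orth_sym: "iso_orth x y \<Longrightarrow> iso_orth y x"
  unfolding iso_orth_def by (metis add.commute norm_minus_commute)

lemma orth_neg2: "iso_orth x y \<Longrightarrow> iso_orth x (-y)"
  unfolding iso_orth_def by (simp add: norm_minus_commute)

lemma orth_negboth: "iso_orth x y \<Longrightarrow> iso_orth (-x) (-y)"
  unfolding iso_orth_def by (metis minus_add_distrib minus_diff_eq norm_minus_cancel diff_conv_add_uminus)

lemma orth0: "iso_orth x 0" "iso_orth 0 y"
  unfolding iso_orth_def by (simp_all add: norm_minus_commute)

lemma half: "2 *\<^sub>R a = b \<Longrightarrow> a = (1/2) *\<^sub>R (b::'b::real_vector)"
  by (metis scaleR_scaleR nonzero_divide_eq_eq scaleR_one zero_neq_numeral)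

lemma quarter: "4 *\<^sub>R a = b \<Longrightarrow> a = (1/4) *\<^sub>R (b::'b::real_vector)"
  by (metis scaleR_scaleR nonzero_divide_eq_eq scaleR_one zero_neq_numeral)

lemma four: "4 *\<^sub>R (v::'b::real_vector) = v + (v + (v + v))"
proof -
  have "(4::real) = 1 + (1 + (1 + 1))" by simp
  then show ?thesis by (metis scaleR_add_left scaleR_one)
qed

lemma main:
  fixes f g :: "'a::real_normed_vector \<Rightarrow> 'b::real_normed_vector"
  assumes E: "E > 0"
    and G: "\<forall>x y. iso_orth x y \<longrightarrow> norm (f (x + y) + g (x - y) - f x - g x - f y - g (-y)) \<le> E"
  shows "lin_comb_CQK f \<and> lin_comb_CQK g"
proof -
  define GG where "GG x y = f (x + y) + g (x - y) - f x - g x - f y - g (-y)" for x y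
  define Od where "Od x y = GG x y - GG (-x) (-y)" for x y
  define Ev where "Ev x y = GG x y + GG (-x) (-y)" for x y
  have GGb: "norm (GG x y) \<le> E" if "iso_orth x y" for x y
    using G that unfolding GG_def by blast
  have Odb: "norm (Od x y) \<le> 2*E" if "iso_orth x y" for x y
  proof -
    have "norm (Od x y) \<le> norm (GG x y) + norm (GG (-x) (-y))"
      unfolding Od_def by (rule norm_triangle_ineq4)
    thus ?thesis using GGb[OF that] GGb[OF orth_negboth[OF that]] by linarith
  qed
  have Evb: "norm (Ev x y) \<le> 2*E" if "iso_orth x y" for x y
  proof -
    have "norm (Ev x y) \<le> norm (GG x y) + norm (GG (-x) (-y))"
      unfolding Ev_def by (rule norm_triangle_ineq)
    thus ?thesis using GGb[OF that] GGb[OF orth_negboth[OF that]] by linarith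
  qed
  define fo where "fo x = f x - f (-x)" for x
  define go where "go x = g x - g (-x)" for x
  define A where "A x = f x + f (-x) + g x + g (-x)" for x
  define B where "B x = f x + f (-x) - g x - g (-x)" for x
  have cf: "approx_orth_cauchy fo"
    unfolding approx_orth_cauchy_def
  proof (intro exI[of _ "2*E"] conjI allI impI)
    show "2*E > 0" using E by simp
    fix x y :: 'a assume o: "iso_orth x y"
    have eq: "fo (x + y) - fo x - fo y = (1/2) *\<^sub>R (Od x y + Od y x)"
      by (rule half) (simp add: fo_def Od_def GG_def algebra_simps scaleR_2)
    have "norm (Od x y + Od y x) \<le> 4*E"
      using norm_triangle_ineq[of "Od x y" "Od y x"] Odb[OF o] Odb[OF orth_sym[OF o]] by linarith
    thus "norm (fo (x + y) - fo x - fo y) \<le> 2*E" unfolding eq by simp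
  qed
  have cg: "approx_orth_cauchy go"
    unfolding approx_orth_cauchy_def
  proof (intro exI[of _ "2*E"] conjI allI impI)
    show "2*E > 0" using E by simp
    fix x y :: 'a assume o: "iso_orth x y"
    have eq: "go (x + y) - go x - go y = (1/2) *\<^sub>R (Od x (-y) - Od (-y) x)"
    proof (rule half)
      have e: "- y - x = - x - y" by (simp add: algebra_simps)
      show "2 *\<^sub>R (go (x + y) - go x - go y) = Od x (-y) - Od (-y) x"
        by (simp add: go_def Od_def GG_def algebra_simps scaleR_2 e)
    qed
    have "norm (Od x (-y) - Od (-y) x) \<le> 4*E"
      using norm_triangle_ineq4[of "Od x (-y)" "Od (-y) x"] Odb[OF orth_neg2[OF o]] Odb[OF orth_sym[OF orth_neg2[OF o]]] by linarith
    thus "norm (go (x + y) - go x - go y) \<le> 2*E" unfolding eq by simp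
  qed
  have qA: "approx_orth_quadratic A"
    unfolding approx_orth_quadratic_def
  proof (intro exI[of _ "4*E"] conjI allI impI)
    show "4*E > 0" using E by simp
    fix x y :: 'a assume o: "iso_orth x y"
    have eq: "A (x + y) + A (x - y) - 2 *\<^sub>R A x - 2 *\<^sub>R A y = Ev x y + Ev x (-y)"
      unfolding A_def Ev_def GG_def by (simp add: algebra_simps scaleR_2)
    show "norm (A (x + y) + A (x - y) - 2 *\<^sub>R A x - 2 *\<^sub>R A y) \<le> 4*E"
      unfolding eq using norm_triangle_ineq[of "Ev x y" "Ev x (-y)"] Evb[OF o] Evb[OF orth_neg2[OF o]] by linarith
  qed
  have kB: "approx_orth_constant B"
    unfolding approx_orth_constant_def
  proof (intro exI[of _ "4*E"] conjI allI impI)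
    show "4*E > 0" using E by simp
    fix x y :: 'a assume o: "iso_orth x y"
    have eq: "B (x + y) - B (x - y) = Ev x y - Ev x (-y)"
      unfolding B_def Ev_def GG_def by (simp add: algebra_simps)
    show "norm (B (x + y) - B (x - y)) \<le> 4*E"
      unfolding eq using norm_triangle_ineq4[of "Ev x y" "Ev x (-y)"] Evb[OF o] Evb[OF orth_neg2[OF o]] by linarith
  qed
  have df0: "f x = (1/4) *\<^sub>R (2 *\<^sub>R fo x + A x + B x)" for x
    by (rule quarter) (simp add: fo_def A_def B_def algebra_simps scaleR_2 four)
  have dg0: "g x = (1/4) *\<^sub>R (2 *\<^sub>R go x + A x - B x)" for x
    by (rule quarter) (simp add: go_def A_def B_def algebra_simps scaleR_2 four)
  have df: "f x = (1/2) *\<^sub>R fo x + (1/4) *\<^sub>R A x + (1/4) *\<^sub>R B x" for x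
    unfolding df0[of x] by (simp add: scaleR_add_right)
  have dg: "g x = (1/2) *\<^sub>R go x + (1/4) *\<^sub>R A x + (-1/4) *\<^sub>R B x" for x
    unfolding dg0[of x] by (simp add: scaleR_add_right scaleR_diff_right)
  have "lin_comb_CQK f" unfolding lin_comb_CQK_def
    apply (rule exI[of _ "1/2"], rule exI[of _ "1/4"], rule exI[of _ "1/4"])
    apply (rule exI[of _ fo], rule exI[of _ A], rule exI[of _ B])
    using cf qA kB df by blast
  moreover have "lin_comb_CQK g" unfolding lin_comb_CQK_def
    apply (rule exI[of _ "1/2"], rule exI[of _ "1/4"], rule exI[of _ "-1/4"])
    apply (rule exI[of _ go], rule exI[of _ A], rule exI[of _ B])
    using cg qA kB dg by blast
  ultimately show ?thesis by blast
qed

theorem theorem3p1: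
  fixes f g h k :: "'a::real_normed_vector \<Rightarrow> 'b::banach"
    and \<epsilon> :: real
  assumes "f 0 = 0" and "g 0 = 0" and "h 0 = 0" and "k 0 = 0"
    and "\<epsilon> > 0"
    and "\<forall>x y. iso_orth x y \<longrightarrow> norm (f (x + y) + g (x - y) - h x - k y) \<le> \<epsilon>"
  shows "lin_comb_CQK f \<and> lin_comb_CQK g"
proof (rule main[of "3*\<epsilon>"])
  show "3*\<epsilon> > 0" using assms(5) by simp
  let ?D = "\<lambda>x y. f (x + y) + g (x - y) - h x - k y"
  show "\<forall>x y. iso_orth x y \<longrightarrow> norm (f (x + y) + g (x - y) - f x - g x - f y - g (-y)) \<le> 3*\<epsilon>"
  proof (intro allI impI)
    fix x y :: 'a assume o: "iso_orth x y"
    have eq: "f (x + y) + g (x - y) - f x - g x - f y - g (-y) = ?D x y - ?D x 0 - ?D 0 y"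
      using assms(1-4) by (simp add: algebra_simps)
    have b1: "norm (?D x y) \<le> \<epsilon>" using assms(6) o by blast
    have b2: "norm (?D x 0) \<le> \<epsilon>" using assms(6) orth0 by blast
    have b3: "norm (?D 0 y) \<le> \<epsilon>" using assms(6) orth0 by blast
    have "norm (?D x y - ?D x 0 - ?D 0 y) \<le> norm (?D x y) + norm (?D x 0) + norm (?D 0 y)"
      using norm_triangle_ineq4[of "?D x y - ?D x 0" "?D 0 y"] norm_triangle_ineq4[of "?D x y" "?D x 0"]
      by linarith
    thus "norm (f (x + y) + g (x - y) - f x - g x - f y - g (-y)) \<le> 3*\<epsilon>"
      unfolding eq using b1 b2 b3 by linarith
  qed
qed

end
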